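(* Let $A$ be a Frobenius algebra of dimension $n$ over a field $\mathbb{k}$ with bilinear form $B$ and Nakayama automorphism $\nu$. Let $\{e_1,\dots,e_n\}$ be a basis of $A$ and $\{e_1^\#,\dots,e_n^\#\}$ the dual basis with $B(e_i^\#,e_j)=\delta_{ij}$, and let $\Delta_0\in\mathcal{E}_A$ be the Frobenius coproduct $\Delta_0(x)=\sum_{i=1}^n xe_i\otimes e_i^\#$. Then $\mathcal{E}_A$ is generated as a left $A$-module (under $\star$) by $\Delta_0$: for every $\Delta\in\mathcal{E}_A$ there exists $a\in A$ such that $\Delta=a\star\Delta_0$.
   Context: A Frobenius algebra over a field $\mathbb{k}$ is a finite-dimensional associative unital $\mathbb{k}$-algebra $A$ with a nondegenerate bilinear form $B:A\times A\to\mathbb{k}$ with $B(ab,c)=B(a,bc)$. Its Nakayama automorphism is the algebra automorphism $\nu:A\to A$ with $B(x,y)=B(y,\nu(x))$ for all $x,y\in A$. The Frobenius space $\mathcal{E}_A$ is the $\mathbb{k}$-vector space of all $\mathbb{k}$-linear maps $\Delta:A\to A\otimes_{\mathbb{k}} A$ that are $A$-bimodule homomorphisms, where $A\otimes A$ has bimodule structure $a(x\otimes y)b=ax\otimes yb$; such a $\Delta$ is determined by $\Delta(1_A)$. The left $A$-module structure $\star$ on $\mathcal{E}_A$ is defined by: if $\Delta(1_A)=\sum_j x_j\otimes y_j$ then $a\star\Delta$ is the element of $\mathcal{E}_A$ with $(a\star\Delta)(1_A)=\sum_j x_j\otimes\nu^{-1}(a)y_j$. *)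

theory Defs
  imports Complex_Main
begin

definition lin_fun :: "('k::field \<Rightarrow> 'a::ring_1 \<Rightarrow> 'a) \<Rightarrow> ('a \<Rightarrow> 'k) \<Rightarrow> bool" where
  "lin_fun sc f \<longleftrightarrow> Vector_Spaces.linear sc (*) f"

text \<open>Tensor product A (x) A over k, realized concretely inside (A* x A*)^*:
  a tensor is the function on pairs of linear functionals (f,g); the value
  at non-linear arguments is normalised to 0.  x (x) y is (f,g) |-> f x * g y.\<close>

type_synonym ('k, 'a) tensor = "('a \<Rightarrow> 'k) \<Rightarrow> ('a \<Rightarrow> 'k) \<Rightarrow> 'k"

definition tensor :: "('k::field \<Rightarrow> 'a::ring_1 \<Rightarrow> 'a) \<Rightarrow> 'a \<Rightarrow> 'a \<Rightarrow> ('k, 'a) tensor" where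
  "tensor sc x y = (\<lambda>f g. if lin_fun sc f \<and> lin_fun sc g then f x * g y else 0)"

definition tsum :: "('k::field \<Rightarrow> 'a::ring_1 \<Rightarrow> 'a) \<Rightarrow> ('a \<times> 'a) list \<Rightarrow> ('k, 'a) tensor" where
  "tsum sc xs = (\<lambda>f g. \<Sum>p\<leftarrow>xs. tensor sc (fst p) (snd p) f g)"

definition tensor_space :: "('k::field \<Rightarrow> 'a::ring_1 \<Rightarrow> 'a) \<Rightarrow> ('k, 'a) tensor set" where
  "tensor_space sc = range (tsum sc)"

definition tadd :: "('k::field, 'a) tensor \<Rightarrow> ('k, 'a) tensor \<Rightarrow> ('k, 'a) tensor" where
  "tadd S T = (\<lambda>f g. S f g + T f g)"

definition tscale :: "'k::field \<Rightarrow> ('k, 'a) tensor \<Rightarrow> ('k, 'a) tensor" where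
  "tscale c T = (\<lambda>f g. c * T f g)"

text \<open>left action a(x (x) y) = ax (x) y\<close>
definition lmul :: "('k::field \<Rightarrow> 'a::ring_1 \<Rightarrow> 'a) \<Rightarrow> 'a \<Rightarrow> ('k, 'a) tensor \<Rightarrow> ('k, 'a) tensor" where
  "lmul sc a T = (\<lambda>f g. if lin_fun sc f \<and> lin_fun sc g then T (\<lambda>x. f (a * x)) g else 0)"

text \<open>right action (x (x) y)b = x (x) yb\<close>
definition rmul :: "('k::field \<Rightarrow> 'a::ring_1 \<Rightarrow> 'a) \<Rightarrow> ('k, 'a) tensor \<Rightarrow> 'a \<Rightarrow> ('k, 'a) tensor" where
  "rmul sc T b = (\<lambda>f g. if lin_fun sc f \<and> lin_fun sc g then T f (\<lambda>y. g (y * b)) else 0)"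

text \<open>inner action x (x) y |-> x (x) ay\<close>
definition mid :: "('k::field \<Rightarrow> 'a::ring_1 \<Rightarrow> 'a) \<Rightarrow> 'a \<Rightarrow> ('k, 'a) tensor \<Rightarrow> ('k, 'a) tensor" where
  "mid sc a T = (\<lambda>f g. if lin_fun sc f \<and> lin_fun sc g then T f (\<lambda>y. g (a * y)) else 0)"

definition frob_space :: "('k::field \<Rightarrow> 'a::ring_1 \<Rightarrow> 'a) \<Rightarrow> ('a \<Rightarrow> ('k, 'a) tensor) set" where
  "frob_space sc = {D. (\<forall>x. D x \<in> tensor_space sc)
      \<and> (\<forall>x y. D (x + y) = tadd (D x) (D y))
      \<and> (\<forall>c x. D (sc c x) = tscale c (D x))
      \<and> (\<forall>a x. D (a * x) = lmul sc a (D x))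
      \<and> (\<forall>x b. D (x * b) = rmul sc (D x) b)}"

text \<open>a \<star> D: the bimodule map with (a \<star> D)(1) = sum_j x_j (x) nu^-1(a) y_j
  where D(1) = sum_j x_j (x) y_j; as a bimodule map it sends x to x (a \<star> D)(1).\<close>
definition star :: "('k::field \<Rightarrow> 'a::ring_1 \<Rightarrow> 'a) \<Rightarrow> ('a \<Rightarrow> 'a) \<Rightarrow> 'a \<Rightarrow> ('a \<Rightarrow> ('k, 'a) tensor)
    \<Rightarrow> ('a \<Rightarrow> ('k, 'a) tensor)" where
  "star sc \<nu> a D = (\<lambda>x. lmul sc x (mid sc (inv \<nu> a) (D 1)))"

end

theory Submission
  imports Defs
begin

lemma lf_add: "lin_fun sc f \<Longrightarrow> f (x + y) = f x + f y"
  unfolding lin_fun_def by (simp add: Vector_Spaces.linear_iff)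
lemma lf_scale: "lin_fun sc f \<Longrightarrow> f (sc c x) = c * f x"
  unfolding lin_fun_def by (simp add: Vector_Spaces.linear_iff)
lemma lf_sum: "lin_fun sc f \<Longrightarrow> f (sum h I) = (\<Sum>i\<in>I. f (h i))"
  unfolding lin_fun_def by (metis module_hom.sum module_hom_iff_linear)
lemma lf_diff: "lin_fun sc f \<Longrightarrow> f (x - y) = f x - f y"
  unfolding lin_fun_def by (metis module_hom.diff module_hom_iff_linear)
lemma lf_left: assumes "lin_fun sc f" and h: "\<And>c x y. sc c (x * y) = x * sc c y" shows "lin_fun sc (\<lambda>z. f (a * z))"
  using assms(1) unfolding lin_fun_def Vector_Spaces.linear_iff by (simp add: distrib_left flip: h)
lemma lf_right: assumes "lin_fun sc f" and h: "\<And>c x y. sc c (x * y) = sc c x * y" shows "lin_fun sc (\<lambda>z. f (z * a))"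
  using assms(1) unfolding lin_fun_def Vector_Spaces.linear_iff by (simp add: distrib_right flip: h)
lemma tsum_eval: "tsum sc L f g = (if lin_fun sc f \<and> lin_fun sc g then
   (\<Sum>k<length L. f (fst (L!k)) * g (snd (L!k))) else 0)"
  unfolding tsum_def tensor_def by (auto simp: sum_list_sum_nth atLeast0LessThan)
lemma tsum_eval_upt: "tsum sc (map h [0..<n]) f g = (if lin_fun sc f \<and> lin_fun sc g then
   (\<Sum>k<n. f (fst (h k)) * g (snd (h k))) else 0)"
  unfolding tsum_def tensor_def by (auto simp: interv_sum_list_conv_sum_set_nat atLeast0LessThan)

theorem theorem8:
  fixes sc :: "'k::field \<Rightarrow> 'a::ring_1 \<Rightarrow> 'a"
    and B :: "'a \<Rightarrow> 'a \<Rightarrow> 'k"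
    and \<nu> :: "'a \<Rightarrow> 'a"
    and n :: nat
    and e es :: "nat \<Rightarrow> 'a"
    and D0 :: "'a \<Rightarrow> ('k, 'a) tensor"
  assumes vs: "vector_space sc"
    and alg_l: "\<And>c x y. sc c (x * y) = sc c x * y"
    and alg_r: "\<And>c x y. sc c (x * y) = x * sc c y"
    and basis_inj: "inj_on e {..<n}"
    and basis_indep: "\<not> module.dependent sc (e ` {..<n})"
    and basis_span: "module.span sc (e ` {..<n}) = UNIV"
    and B_lin1: "\<And>y. Vector_Spaces.linear sc (*) (\<lambda>x. B x y)"
    and B_lin2: "\<And>x. Vector_Spaces.linear sc (*) (\<lambda>y. B x y)"
    and B_nondeg1: "\<And>x. (\<forall>y. B x y = 0) \<Longrightarrow> x = 0"
    and B_nondeg2: "\<And>y. (\<forall>x. B x y = 0) \<Longrightarrow> y = 0"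
    and B_assoc: "\<And>a b c. B (a * b) c = B a (b * c)"
    and nu_bij: "bij \<nu>"
    and nu_lin: "Vector_Spaces.linear sc sc \<nu>"
    and nu_mult: "\<And>x y. \<nu> (x * y) = \<nu> x * \<nu> y"
    and nu_one: "\<nu> 1 = 1"
    and nu_B: "\<And>x y. B x y = B y (\<nu> x)"
    and dual: "\<And>i j. i < n \<Longrightarrow> j < n \<Longrightarrow> B (es i) (e j) = (if i = j then 1 else 0)"
    and D0_def: "\<And>x. D0 x = tsum sc (map (\<lambda>i. (x * e i, es i)) [0..<n])"
  shows "D0 \<in> frob_space sc \<and> (\<forall>D \<in> frob_space sc. \<exists>a. D = star sc \<nu> a D0)"
proof -
  interpret V: vector_space sc by (rule vs)
  have LL: "lin_fun sc (\<lambda>z. f (a * z))" if "lin_fun sc f" for f a using lf_left[OF that alg_r] .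
  have RR: "lin_fun sc (\<lambda>z. f (z * a))" if "lin_fun sc f" for f a using lf_right[OF that alg_l] .
  have linB1: "lin_fun sc (\<lambda>x. B x y)" for y using B_lin1 unfolding lin_fun_def .
  have linB2: "lin_fun sc (\<lambda>y. B x y)" for x using B_lin2 unfolding lin_fun_def .
  have E2: "y = (\<Sum>i<n. sc (B (es i) y) (e i))" for y
  proof -
    have "y \<in> V.span (e ` {..<n})" using basis_span by simp
    then obtain u where u: "y = (\<Sum>v\<in>e ` {..<n}. sc (u v) v)"
      using V.span_finite[of "e ` {..<n}"] by auto
    then have u2: "y = (\<Sum>i<n. sc (u (e i)) (e i))"
      using sum.reindex[OF basis_inj, of "\<lambda>v. sc (u v) v"] by simp
    have "B (es k) y = u (e k)" if "k < n" for k
    proof -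
      have "B (es k) y = (\<Sum>i<n. u (e i) * B (es k) (e i))"
        apply (subst u2) by (simp add: lf_sum[OF linB2] lf_scale[OF linB2])
      also have "\<dots> = (\<Sum>i<n. if i = k then u (e k) else 0)"
        by (rule sum.cong) (auto simp: dual that)
      finally show ?thesis using that by simp
    qed
    then show ?thesis by (subst u2) (auto intro!: sum.cong)
  qed
  have E1: "z = (\<Sum>j<n. sc (B z (e j)) (es j))" for z
  proof -
    define w where "w = z - (\<Sum>j<n. sc (B z (e j)) (es j))"
    have wk: "B w (e k) = 0" if "k < n" for k
    proof -
      have "B w (e k) = B z (e k) - (\<Sum>j<n. B z (e j) * B (es j) (e k))"
        unfolding w_def by (simp add: lf_diff[OF linB1] lf_sum[OF linB1] lf_scale[OF linB1])
      also have "(\<Sum>j<n. B z (e j) * B (es j) (e k)) = (\<Sum>j<n. if j = k then B z (e k) else 0)"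
        by (rule sum.cong) (auto simp: dual that)
      finally show ?thesis using that by simp
    qed
    have "B w y = 0" for y
    proof -
      have "B w y = (\<Sum>i<n. B (es i) y * B w (e i))"
        apply (subst E2[of y]) by (simp add: lf_sum[OF linB2] lf_scale[OF linB2])
      also have "\<dots> = 0" using wk by simp
      finally show ?thesis .
    qed
    then have "w = 0" using B_nondeg1 by blast
    then show ?thesis unfolding w_def by simp
  qed
  have D0ev: "D0 x f g = (if lin_fun sc f \<and> lin_fun sc g then (\<Sum>i<n. f (x * e i) * g (es i)) else 0)" for x f g
    unfolding D0_def tsum_eval_upt by simp
  have expF: "F y = (\<Sum>i<n. B (es i) y * F (e i))" if "lin_fun sc F" for F y
    apply (subst E2[of y]) by (simp add: lf_sum[OF that] lf_scale[OF that])
  have expG: "G z = (\<Sum>j<n. B z (e j) * G (es j))" if "lin_fun sc G" for G z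
    apply (subst E1[of z]) by (simp add: lf_sum[OF that] lf_scale[OF that])
  have K1: "(\<Sum>i<n. f (x * b * e i) * g (es i)) = (\<Sum>j<n. f (x * e j) * g (es j * b))"
    if f: "lin_fun sc f" and g: "lin_fun sc g" for f g x b
  proof -
    have F: "lin_fun sc (\<lambda>z. f (x * z))" by (rule lf_left[OF f alg_r])
    have "(\<Sum>j<n. f (x * e j) * g (es j * b)) = (\<Sum>j<n. \<Sum>i<n. f (x * e j) * (B (es j * b) (e i) * g (es i)))"
      by (subst expG[OF g]) (simp add: sum_distrib_left)
    also have "\<dots> = (\<Sum>i<n. \<Sum>j<n. f (x * e j) * (B (es j * b) (e i) * g (es i)))"
      by (rule sum.swap)
    also have "\<dots> = (\<Sum>i<n. (\<Sum>j<n. B (es j) (b * e i) * f (x * e j)) * g (es i))"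
      by (intro sum.cong refl) (subst sum_distrib_right, simp add: B_assoc mult_ac)
    also have "\<dots> = (\<Sum>i<n. f (x * (b * e i)) * g (es i))"
      by (simp add: expF[OF F, symmetric])
    finally show ?thesis by (simp add: mult.assoc)
  qed
  have part1: "D0 \<in> frob_space sc"
    unfolding frob_space_def
  proof (intro CollectI conjI allI)
    show "D0 x \<in> tensor_space sc" for x unfolding D0_def tensor_space_def by simp
    show "D0 (x + y) = tadd (D0 x) (D0 y)" for x y
      unfolding tadd_def by (intro ext) (auto simp: D0ev distrib_right lf_add sum.distrib)
    show "D0 (sc c x) = tscale c (D0 x)" for c x
      unfolding tscale_def by (intro ext) (auto simp: D0ev alg_l[symmetric] lf_scale sum_distrib_left mult.assoc)
    show "D0 (a * x) = lmul sc a (D0 x)" for a x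
      unfolding lmul_def proof (intro ext)
        fix f g show "D0 (a * x) f g = (if lin_fun sc f \<and> lin_fun sc g then D0 x (\<lambda>z. f (a * z)) g else 0)"
          using LL[of f a] by (simp add: D0ev mult.assoc)
      qed
    show "D0 (x * b) = rmul sc (D0 x) b" for x b
      unfolding rmul_def proof (intro ext)
        fix f g show "D0 (x * b) f g = (if lin_fun sc f \<and> lin_fun sc g then D0 x f (\<lambda>z. g (z * b)) else 0)"
          using RR[of g b] by (simp add: D0ev K1)
      qed
  qed
  have part2: "\<exists>a. D = star sc \<nu> a D0" if D: "D \<in> frob_space sc" for D
  proof -
    from D have D1: "D 1 \<in> tensor_space sc" and Dl: "\<And>a x. D (a * x) = lmul sc a (D x)"
      and Dr: "\<And>x b. D (x * b) = rmul sc (D x) b"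
      unfolding frob_space_def by auto
    from D1 obtain L where L: "D 1 = tsum sc L" unfolding tensor_space_def by auto
    define m where "m = length L"
    define xj where "xj k = fst (L ! k)" for k
    define yj where "yj k = snd (L ! k)" for k
    have D1ev: "D 1 f g = (if lin_fun sc f \<and> lin_fun sc g then (\<Sum>k<m. f (xj k) * g (yj k)) else 0)" for f g
      unfolding L tsum_eval m_def xj_def yj_def by simp
    have BM: "(\<Sum>k<m. F (b * xj k) * G (yj k)) = (\<Sum>k<m. F (xj k) * G (yj k * b))"
      if F: "lin_fun sc F" and G: "lin_fun sc G" for F G b
    proof -
      have "lmul sc b (D 1) F G = rmul sc (D 1) b F G"
        using Dl[of b 1] Dr[of 1 b] by simp
      then show ?thesis
        unfolding lmul_def rmul_def using F G lf_left[OF F alg_r] lf_right[OF G alg_l]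
        by (simp add: D1ev)
    qed
    define c where "c = (\<Sum>k<m. sc (B 1 (xj k)) (yj k))"
    have key: "(\<Sum>k<m. F (xj k) * g (yj k)) = (\<Sum>i<n. F (e i) * g (c * es i))"
      if F: "lin_fun sc F" and g: "lin_fun sc g" for F g
    proof -
      have gc: "g (c * es i) = (\<Sum>k<m. B (es i) (xj k) * g (yj k))" for i
      proof -
        have "g (c * es i) = (\<Sum>k<m. B 1 (xj k) * g (yj k * es i))"
          unfolding c_def sum_distrib_right alg_l[symmetric]
          by (simp add: lf_sum[OF g] lf_scale[OF g])
        also have "\<dots> = (\<Sum>k<m. B 1 (es i * xj k) * g (yj k))"
          using BM[OF linB2[of 1] g, of "es i"] by simp
        finally show ?thesis by (simp add: B_assoc[symmetric])
      qed
      have "(\<Sum>i<n. F (e i) * g (c * es i)) = (\<Sum>i<n. \<Sum>k<m. F (e i) * (B (es i) (xj k) * g (yj k)))"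
        by (simp add: gc sum_distrib_left)
      also have "\<dots> = (\<Sum>k<m. \<Sum>i<n. F (e i) * (B (es i) (xj k) * g (yj k)))"
        by (rule sum.swap)
      also have "\<dots> = (\<Sum>k<m. (\<Sum>i<n. B (es i) (xj k) * F (e i)) * g (yj k))"
        by (intro sum.cong refl) (subst sum_distrib_right, simp add: mult_ac)
      also have "\<dots> = (\<Sum>k<m. F (xj k) * g (yj k))"
        by (simp add: expF[OF F, symmetric])
      finally show ?thesis by simp
    qed
    have invc: "inv \<nu> (\<nu> c) = c" using nu_bij by (simp add: bij_is_inj)
    have "D = star sc \<nu> (\<nu> c) D0"
    proof (intro ext)
      fix x f g
      have "D x = lmul sc x (D 1)" using Dl[of x 1] by simp
      then show "D x f g = star sc \<nu> (\<nu> c) D0 x f g"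
        unfolding star_def invc lmul_def mid_def
        using LL[of f x] key[OF LL[of f x]]
        by (auto simp: D1ev D0ev LL)
    qed
    then show ?thesis by blast
  qed
  show ?thesis using part1 part2 by blast
qed

end
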